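(* Let $\mathcal H$ be a complex Hilbert space and $k\ge 3$. If a nonzero continuous symmetric $k$-linear form $T$ on $\mathcal H$ attains its norm at $(\mathbf{x}_1,\ldots,\mathbf{x}_k)$, where $\mathbf{x}_1,\ldots,\mathbf{x}_k$ are norm one vectors, then $\dim(\operatorname{span}\{\mathbf{x}_1,\ldots,\mathbf{x}_k\})=1$.
   Context: $k$-linear means $\mathbb C$-multilinear. $\|T\|=\sup\{|T(\mathbf{w}_1,\ldots,\mathbf{w}_k)|:\|\mathbf{w}_i\|\le1\}$, and $T$ attains its norm at $(\mathbf{x}_1,\ldots,\mathbf{x}_k)$ if $|T(\mathbf{x}_1,\ldots,\mathbf{x}_k)|=\|T\|$. *)

theory Defs
  imports "HOL-Analysis.Analysis"
begin

class complex_hilbert = banach +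
  fixes scaleC :: "complex \<Rightarrow> 'a \<Rightarrow> 'a"
    and cinner :: "'a \<Rightarrow> 'a \<Rightarrow> complex"
  assumes scaleC_add_right: "scaleC c (x + y) = scaleC c x + scaleC c y"
    and scaleC_add_left: "scaleC (b + c) x = scaleC b x + scaleC c x"
    and scaleC_scaleC: "scaleC b (scaleC c x) = scaleC (b * c) x"
    and scaleC_one: "scaleC 1 x = x"
    and scaleR_scaleC: "scaleR r x = scaleC (complex_of_real r) x"
    and cinner_add_left: "cinner (x + y) z = cinner x z + cinner y z"
    and cinner_scaleC_left: "cinner (scaleC c x) y = cnj c * cinner x y"
    and cinner_commute: "cinner x y = cnj (cinner y x)"
    and norm_cinner: "norm x = sqrt (Re (cinner x x))"

lemma complex_hilbert_vector_space:
  "vector_space (scaleC :: complex \<Rightarrow> 'a::complex_hilbert \<Rightarrow> 'a)"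
  by unfold_locales (simp_all add: scaleC_add_right scaleC_add_left scaleC_scaleC scaleC_one)

abbreviation cspan :: "'a::complex_hilbert set \<Rightarrow> 'a set" where
  "cspan \<equiv> module.span scaleC"

abbreviation cdim :: "'a::complex_hilbert set \<Rightarrow> nat" where
  "cdim \<equiv> vector_space.dim scaleC"

text \<open>A k-linear form is represented as a function on tuples \<open>nat \<Rightarrow> 'a\<close>
that only depends on the entries with index < k.\<close>

definition multilinear_form :: "nat \<Rightarrow> ((nat \<Rightarrow> 'a::complex_hilbert) \<Rightarrow> complex) \<Rightarrow> bool" where
  "multilinear_form k T \<longleftrightarrow>
     (\<forall>w w'. (\<forall>i<k. w i = w' i) \<longrightarrow> T w = T w') \<and>
     (\<forall>i<k. \<forall>w a b x y. T (w(i := scaleC a x + scaleC b y)) = a * T (w(i := x)) + b * T (w(i := y)))"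

definition symmetric_form :: "nat \<Rightarrow> ((nat \<Rightarrow> 'a) \<Rightarrow> complex) \<Rightarrow> bool" where
  "symmetric_form k T \<longleftrightarrow> (\<forall>\<sigma> w. \<sigma> permutes {..<k} \<longrightarrow> T (w \<circ> \<sigma>) = T w)"

definition form_norm :: "nat \<Rightarrow> ((nat \<Rightarrow> 'a::real_normed_vector) \<Rightarrow> complex) \<Rightarrow> real" where
  "form_norm k T = Sup {cmod (T w) | w. \<forall>i<k. norm (w i) \<le> 1}"

definition attains_norm_at :: "nat \<Rightarrow> ((nat \<Rightarrow> 'a::real_normed_vector) \<Rightarrow> complex) \<Rightarrow> (nat \<Rightarrow> 'a) \<Rightarrow> bool" where
  "attains_norm_at k T x \<longleftrightarrow> (\<forall>i<k. norm (x i) \<le> 1) \<and> cmod (T x) = form_norm k T"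

end

theory Submission
  imports Defs
begin

lemma scaleC_zero_left[simp]: "scaleC 0 (x::'a::complex_hilbert) = 0"
  by (metis add_cancel_right_right add.right_neutral scaleC_add_left)

lemma scaleC_zero_right[simp]: "scaleC c (0::'a::complex_hilbert) = 0"
  by (metis add_cancel_right_right add.right_neutral scaleC_add_right)

lemma scaleC_minus_left: "scaleC (- c) (x::'a::complex_hilbert) = - scaleC c x"
proof -
  have "scaleC (-c) x + scaleC c x = 0" by (metis scaleC_add_left add.left_inverse scaleC_zero_left)
  thus ?thesis by (simp add: eq_neg_iff_add_eq_0)
qed

lemma scaleC_diff_left: "scaleC (b - c) (x::'a::complex_hilbert) = scaleC b x - scaleC c x"
  by (metis diff_conv_add_uminus scaleC_add_left scaleC_minus_left)

lemma scaleC_diff_right: "scaleC c (x - y::'a::complex_hilbert) = scaleC c x - scaleC c y"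
  by (metis add_diff_cancel diff_add_cancel scaleC_add_right)

lemma cinner_add_right: "cinner (x::'a::complex_hilbert) (y + z) = cinner x y + cinner x z"
  by (metis cinner_add_left cinner_commute complex_cnj_add)

lemma cinner_scaleC_right: "cinner (x::'a::complex_hilbert) (scaleC c y) = c * cinner x y"
  by (metis cinner_commute cinner_scaleC_left complex_cnj_cnj complex_cnj_mult)

lemma cinner_zero_left[simp]: "cinner 0 (x::'a::complex_hilbert) = 0"
  by (metis cinner_scaleC_left complex_cnj_zero mult_zero_left scaleC_zero_left)

lemma cinner_zero_right[simp]: "cinner (x::'a::complex_hilbert) 0 = 0"
  by (metis cinner_commute cinner_zero_left complex_cnj_zero)

lemma cinner_diff_left: "cinner (x - y::'a::complex_hilbert) z = cinner x z - cinner y z"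
  by (metis add_diff_cancel cinner_add_left diff_add_cancel)

lemma cinner_diff_right: "cinner (x::'a::complex_hilbert) (y - z) = cinner x y - cinner x z"
  by (metis add_diff_cancel cinner_add_right diff_add_cancel)

lemma cinner_self_real: "cinner (x::'a::complex_hilbert) x = complex_of_real (Re (cinner x x))"
proof -
  have "cinner x x = cnj (cinner x x)" by (rule cinner_commute)
  hence "Im (cinner x x) = 0" by (metis Reals_cnj_iff complex_is_Real_iff)
  thus ?thesis by (simp add: complex_eq_iff)
qed

lemma Re_cinner_self_ge0: "Re (cinner (x::'a::complex_hilbert) x) \<ge> 0"
proof (rule ccontr)
  assume "\<not> ?thesis"
  hence "sqrt (Re (cinner x x)) < 0" by simp
  thus False using norm_cinner[of x] by (metis norm_ge_zero not_le)
qed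

lemma cinner_self_norm: "cinner (x::'a::complex_hilbert) x = complex_of_real ((norm x)^2)"
  using cinner_self_real[of x] norm_cinner[of x] Re_cinner_self_ge0[of x] by simp

lemma cinner_self_eq_0: "cinner (x::'a::complex_hilbert) x = 0 \<longleftrightarrow> x = 0"
  by (simp add: cinner_self_norm)

lemma norm_scaleC: "norm (scaleC c (x::'a::complex_hilbert)) = cmod c * norm x"
proof -
  have "complex_of_real ((norm (scaleC c x))^2) = cinner (scaleC c x) (scaleC c x)"
    by (simp only: cinner_self_norm)
  also have "\<dots> = cnj c * c * cinner x x"
    by (simp add: cinner_scaleC_left cinner_scaleC_right)
  also have "\<dots> = complex_of_real ((cmod c * norm x)^2)"
  proof -
    have "cnj c * c = complex_of_real ((cmod c)^2)" by (metis complex_norm_square mult.commute of_real_power)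
    thus ?thesis by (simp add: cinner_self_norm power_mult_distrib)
  qed
  finally have "(norm (scaleC c x))^2 = (cmod c * norm x)^2" using of_real_eq_iff by blast
  thus ?thesis by (simp add: power2_eq_iff_nonneg)
qed

lemma first_order:
  fixes f :: "'a::complex_hilbert \<Rightarrow> complex"
  assumes lin: "\<And>a b u v. f (scaleC a u + scaleC b v) = a * f u + b * f v"
    and bnd: "\<And>u. cmod (f u) \<le> norm u" and nx: "norm x = 1" and fx: "cmod (f x) = 1"
  shows "f u = f x * cinner x u"
proof -
  define v where "v = u - scaleC (cinner x u) x"
  have xx: "cinner x x = 1" using cinner_self_norm[of x] nx by simp
  have xv: "cinner x v = 0"
    by (simp add: v_def cinner_diff_right cinner_scaleC_right xx)
  have vx: "cinner v x = 0" using xv cinner_commute[of v x] by simp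
  have "u = scaleC (cinner x u) x + scaleC 1 v" by (simp add: v_def scaleC_one)
  hence fu: "f u = cinner x u * f x + f v" using lin by (metis mult_1)
  have "f v = 0"
  proof (rule ccontr)
    assume g0: "f v \<noteq> 0"
    define \<gamma> where "\<gamma> = f v"
    define lam where "lam = f x"
    define \<beta> where "\<beta> = (cmod \<gamma>)^2"
    define N where "N = (norm v)^2"
    define s where "s = 1 / (N + 1)"
    define \<mu> where "\<mu> = lam * cnj \<gamma>"
    define y where "y = scaleC 1 x + scaleC (complex_of_real s * \<mu>) v"
    have bpos: "\<beta> > 0" using g0 by (simp add: \<beta>_def \<gamma>_def)
    have Npos: "N \<ge> 0" by (simp add: N_def)
    have spos: "s > 0" using Npos by (simp add: s_def)
    have sN: "s * N < 1" using Npos by (simp add: s_def field_simps)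
    have lam1: "cmod lam = 1" using fx by (simp add: lam_def)
    have mu2: "(cmod \<mu>)^2 = \<beta>" by (simp add: \<mu>_def \<beta>_def norm_mult lam1)
    have muga: "\<mu> * \<gamma> = lam * complex_of_real \<beta>"
      by (simp add: \<mu>_def \<beta>_def mult.assoc) (metis complex_norm_square mult.commute of_real_power)
    have "f y = lam + complex_of_real s * \<mu> * \<gamma>"
      by (simp add: y_def lin lam_def \<gamma>_def)
    also have "\<dots> = lam * complex_of_real (1 + s * \<beta>)"
      using muga by (simp add: algebra_simps)
    finally have fy: "f y = lam * complex_of_real (1 + s * \<beta>)" .
    have "cmod (f y) = 1 + s * \<beta>"
      unfolding fy norm_mult norm_of_real lam1 using spos bpos by simp
    hence le: "1 + s * \<beta> \<le> norm y" using bnd by metis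
    have "complex_of_real ((norm y)^2) = cinner y y" by (simp only: cinner_self_norm)
    also have "\<dots> = cinner x x + cnj (complex_of_real s * \<mu>) * (complex_of_real s * \<mu>) * cinner v v"
      by (simp add: y_def scaleC_one cinner_add_left cinner_add_right cinner_scaleC_left
          cinner_scaleC_right xv vx)
    also have "\<dots> = complex_of_real (1 + s^2 * \<beta> * N)"
    proof -
      have "cnj (complex_of_real s * \<mu>) * (complex_of_real s * \<mu>) = complex_of_real (s^2 * \<beta>)"
        using mu2 by (simp add: complex_norm_square[symmetric] power2_eq_square mult_ac)
      thus ?thesis unfolding xx by (simp add: cinner_self_norm N_def)
    qed
    finally have ny: "(norm y)^2 = 1 + s^2 * \<beta> * N" using of_real_eq_iff by blast
    have "(1 + s * \<beta>)^2 \<le> (norm y)^2"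
      using le spos bpos by (intro power_mono) auto
    hence "2 * s * \<beta> + s^2 * \<beta>^2 \<le> s^2 * \<beta> * N" using ny by (simp add: power2_eq_square algebra_simps)
    hence "s * \<beta> * (2 + s * \<beta>) \<le> s * \<beta> * (s * N)" by (simp add: power2_eq_square algebra_simps)
    hence "2 + s * \<beta> \<le> s * N" using spos bpos by simp
    thus False using sN spos bpos by (smt (verit) mult_pos_pos)
  qed
  thus ?thesis using fu by (simp add: mult.commute)
qed

context
  fixes k :: nat and T :: "(nat \<Rightarrow> 'a::complex_hilbert) \<Rightarrow> complex"
  assumes ml: "multilinear_form k T"
begin

lemma ml_dep: "(\<And>i. i < k \<Longrightarrow> w i = w' i) \<Longrightarrow> T w = T w'"
  using ml unfolding multilinear_form_def by blast

lemma ml_lin: "i < k \<Longrightarrow> T (w(i := scaleC a x + scaleC b y)) = a * T (w(i := x)) + b * T (w(i := y))"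
  using ml unfolding multilinear_form_def by blast

lemma ml_scale: "i < k \<Longrightarrow> T (w(i := scaleC a x)) = a * T (w(i := x))"
  using ml_lin[of i w a x 0 x] by simp

lemma ml_add: "i < k \<Longrightarrow> T (w(i := x + y)) = T (w(i := x)) + T (w(i := y))"
  using ml_lin[of i w 1 x 1 y] by (simp add: scaleC_one)

lemma ml_zero: "i < k \<Longrightarrow> T (w(i := 0)) = 0"
  using ml_scale[of i w 0 0] by simp

lemma ml_scaleR: "i < k \<Longrightarrow> T (w(i := scaleR r x)) = complex_of_real r * T (w(i := x))"
  by (simp add: scaleR_scaleC ml_scale)

lemma ml_hom: "m \<le> k \<Longrightarrow> T (\<lambda>j. if j < m then scaleR r (w j) else w j) = complex_of_real (r ^ m) * T w"
proof (induction m)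
  case 0
  then show ?case by simp
next
  case (Suc m)
  define g where "g = (\<lambda>j. if j < m then scaleR r (w j) else w j)"
  have g: "(\<lambda>j. if j < Suc m then scaleR r (w j) else w j) = g(m := scaleR r (g m))"
    by (auto simp: g_def)
  have "T (g(m := scaleR r (g m))) = complex_of_real r * T g"
    using Suc.prems ml_scaleR[of m g r "g m"] by simp
  then show ?case using g Suc by (simp add: g_def)
qed

lemma ml_T0: "0 < k \<Longrightarrow> T (\<lambda>_. 0) = 0"
  using ml_zero[of 0 "\<lambda>_. 0"] by (simp add: fun_upd_idem)

lemma ml_bdd:
  assumes k: "0 < k" and cont: "continuous_on UNIV T"
  shows "bdd_above {cmod (T w) | w. \<forall>i<k. norm (w i) \<le> 1}"
proof (rule ccontr)
  assume nb: "\<not> ?thesis"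
  have "\<forall>n::nat. \<exists>w. (\<forall>i<k. norm (w i) \<le> 1) \<and> cmod (T w) > (real n + 1) ^ k"
  proof
    fix n :: nat
    from nb obtain y where "y \<in> {cmod (T w) | w. \<forall>i<k. norm (w i) \<le> 1}" "y > (real n + 1) ^ k"
      unfolding bdd_above_def by (meson not_le)
    thus "\<exists>w. (\<forall>i<k. norm (w i) \<le> 1) \<and> cmod (T w) > (real n + 1) ^ k" by blast
  qed
  then obtain W where W: "\<And>n i. i < k \<Longrightarrow> norm (W n i) \<le> 1" "\<And>n. cmod (T (W n)) > (real n + 1) ^ k"
    by metis
  define V where "V = (\<lambda>n i. if i < k then scaleR (1 / (real n + 1)) (W n i) else 0)"
  have TV: "cmod (T (V n)) > 1" for n
  proof -
    have "T (V n) = T (\<lambda>j. if j < k then scaleR (1 / (real n + 1)) (W n j) else W n j)"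
      by (rule ml_dep) (simp add: V_def)
    also have "\<dots> = complex_of_real ((1 / (real n + 1)) ^ k) * T (W n)"
      by (rule ml_hom) simp
    finally have "cmod (T (V n)) = (1 / (real n + 1)) ^ k * cmod (T (W n))"
      by (simp only: norm_mult norm_of_real) simp
    also have "\<dots> > (1 / (real n + 1)) ^ k * (real n + 1) ^ k"
      using W(2)[of n] by (intro mult_strict_left_mono) auto
    finally show ?thesis by (simp add: power_one_over)
  qed
  have comp: "((\<lambda>n. V n i) \<longlongrightarrow> 0) sequentially" for i
  proof (cases "i < k")
    case True
    have "((\<lambda>n. inverse (real (Suc n))) \<longlongrightarrow> 0) sequentially"
      using LIMSEQ_inverse_real_of_nat_add[where r=0] by simp
    hence l: "((\<lambda>n. 1 / (real n + 1)) \<longlongrightarrow> 0) sequentially"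
      by (simp add: inverse_eq_divide add.commute)
    have "norm (V n i) \<le> 1 / (real n + 1)" for n
      using True W(1)[of i n] by (simp add: V_def divide_le_cancel)
    thus ?thesis by (intro Lim_null_comparison[OF _ l]) simp
  next
    case False
    then show ?thesis by (simp add: V_def)
  qed
  have "limitin (product_topology (\<lambda>i. euclidean) UNIV) V (\<lambda>_. 0) sequentially"
    unfolding limitin_componentwise using comp by simp
  hence lim: "(V \<longlongrightarrow> (\<lambda>_. 0)) sequentially" by (simp add: euclidean_product_topology)
  have "((\<lambda>n. T (V n)) \<longlongrightarrow> T (\<lambda>_. 0)) sequentially"
    using cont lim by (metis continuous_on_tendsto_compose UNIV_I eventually_sequentially)
  hence "((\<lambda>n. T (V n)) \<longlongrightarrow> 0) sequentially" using ml_T0 k by simp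
  hence "eventually (\<lambda>n. cmod (T (V n)) < 1) sequentially"
    using order_tendstoD(2)[OF tendsto_norm] by (metis norm_zero zero_less_one)
  then obtain n where "cmod (T (V n)) < 1" using eventually_sequentially by auto
  thus False using TV[of n] by simp
qed

end


context
  fixes k :: nat and T :: "(nat \<Rightarrow> 'a::complex_hilbert) \<Rightarrow> complex"
  assumes ml: "multilinear_form k T" and sy: "symmetric_form k T"
    and cont: "continuous_on UNIV T" and nz: "T \<noteq> (\<lambda>_. 0)" and k3: "k \<ge> 3"
begin

lemma le_M: "(\<forall>i<k. norm (w i) \<le> 1) \<Longrightarrow> cmod (T w) \<le> form_norm k T"
  unfolding form_norm_def
  by (rule cSup_upper) (use ml_bdd[OF ml _ cont] k3 in auto)

lemma M_pos: "0 < form_norm k T"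
proof -
  obtain w0 where w0: "T w0 \<noteq> 0" using nz by auto
  define c where "c = 1 + (\<Sum>i<k. norm (w0 i))"
  have cpos: "c > 0" unfolding c_def by (smt (verit) sum_nonneg norm_ge_zero)
  define v where "v = (\<lambda>j. if j < k then scaleR (1/c) (w0 j) else w0 j)"
  have "T v = complex_of_real ((1/c) ^ k) * T w0" unfolding v_def by (rule ml_hom[OF ml]) simp
  hence Tv: "T v \<noteq> 0" using w0 cpos by simp
  have "norm (v i) \<le> 1" if "i < k" for i
  proof -
    have "norm (w0 i) \<le> (\<Sum>i<k. norm (w0 i))"
      using that by (intro member_le_sum) auto
    hence "norm (w0 i) \<le> c" by (simp add: c_def)
    thus ?thesis using that cpos by (simp add: v_def divide_le_eq)
  qed
  hence "cmod (T v) \<le> form_norm k T" by (intro le_M) auto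
  thus ?thesis using Tv by (smt (verit) zero_less_norm_iff)
qed

lemma slot_bound:
  assumes w: "\<forall>i<k. norm (w i) = 1" and i: "i < k"
  shows "cmod (T (w(i := u))) \<le> form_norm k T * norm u"
proof (cases "u = 0")
  case True
  then show ?thesis using ml_zero[OF ml i] by simp
next
  case False
  define u' where "u' = scaleR (1 / norm u) u"
  have "norm u' = 1" using False by (simp add: u'_def)
  hence "cmod (T (w(i := u'))) \<le> form_norm k T" using w by (intro le_M) auto
  moreover have "T (w(i := u')) = complex_of_real (1 / norm u) * T (w(i := u))"
    unfolding u'_def by (rule ml_scaleR[OF ml i])
  hence "cmod (T (w(i := u'))) = (1 / norm u) * cmod (T (w(i := u)))"
    by (simp only: norm_mult norm_of_real) simp
  ultimately have "cmod (T (w(i := u))) / norm u \<le> form_norm k T"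
    by simp
  thus ?thesis using False by (simp add: divide_le_eq mult.commute)
qed

lemma FO:
  assumes w: "\<forall>i<k. norm (w i) = 1" and att: "cmod (T w) = form_norm k T" and i: "i < k"
  shows "T (w(i := u)) = T w * cinner (w i) u"
proof -
  define M where "M = form_norm k T"
  have Mpos: "M > 0" using M_pos by (simp add: M_def)
  define f where "f = (\<lambda>u. T (w(i := u)) / complex_of_real M)"
  have "f u = f (w i) * cinner (w i) u"
  proof (rule first_order)
    show "f (scaleC a u + scaleC b v) = a * f u + b * f v" for a b u v
      by (simp add: f_def ml_lin[OF ml i] add_divide_distrib)
    show "cmod (f u) \<le> norm u" for u
      using slot_bound[OF w i, of u] Mpos by (simp add: f_def norm_divide M_def divide_le_eq mult.commute)
    show "norm (w i) = 1" using w i by simp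
    show "cmod (f (w i)) = 1" using att Mpos by (simp add: f_def norm_divide M_def)
  qed
  thus ?thesis using Mpos by (simp add: f_def)
qed

lemma swap:
  assumes "i < k" "j < k" "i \<noteq> j"
  shows "T (w(i := p, j := q)) = T (w(i := q, j := p))"
proof -
  have "Transposition.transpose i j permutes {..<k}" using assms by (intro permutes_swap_id) auto
  hence "T (w(i := p, j := q) \<circ> Transposition.transpose i j) = T (w(i := p, j := q))"
    using sy unfolding symmetric_form_def by blast
  moreover have "w(i := p, j := q) \<circ> Transposition.transpose i j = w(i := q, j := p)"
    using assms by (auto simp: fun_eq_iff Transposition.transpose_def)
  ultimately show ?thesis by simp
qed

lemma expand2:
  assumes "i < k" "l < k" "i \<noteq> l"
  shows "T (w(i := p + scaleC t q, l := p + scaleC t q)) =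
    T (w(i := p, l := p)) + t * T (w(i := p, l := q)) + t * T (w(i := q, l := p)) + t^2 * T (w(i := q, l := q))"
proof -
  have e1: "T (w'(l := p + scaleC t q)) = T (w'(l := p)) + t * T (w'(l := q))" for w'
    using ml_lin[OF ml assms(2), of w' 1 p t q] by (simp add: scaleC_one)
  have e2: "T ((w(l := r))(i := p + scaleC t q)) = T ((w(l := r))(i := p)) + t * T ((w(l := r))(i := q))" for r
    using ml_lin[OF ml assms(1), of "w(l := r)" 1 p t q] by (simp add: scaleC_one)
  have tw: "w(i := a, l := b) = (w(l := b))(i := a)" for a b using assms(3) by (simp add: fun_upd_twist)
  have tw2: "(w(l := b))(i := a) = (w(i := a))(l := b)" for a b using assms(3) by (simp add: fun_upd_twist)
  show ?thesis
    unfolding tw e2 unfolding tw2 e1 by (simp add: algebra_simps power2_eq_square)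
qed

lemma hom2:
  assumes "i < k" "l < k" "i \<noteq> l"
  shows "T (w(i := scaleR r p, l := scaleR r q)) = complex_of_real (r^2) * T (w(i := p, l := q))"
proof -
  have tw: "w(i := a, l := b) = (w(l := b))(i := a)" for a b using assms(3) by (simp add: fun_upd_twist)
  have tw2: "(w(l := b))(i := a) = (w(i := a))(l := b)" for a b using assms(3) by (simp add: fun_upd_twist)
  show ?thesis
    unfolding tw ml_scaleR[OF ml assms(1)] unfolding tw2 ml_scaleR[OF ml assms(2)] by (simp add: power2_eq_square)
qed


lemma cnj_t: "cmod t = 1 \<Longrightarrow> cnj t * t = 1"
  by (metis complex_norm_square mult.commute of_real_1 power_one)

lemma norm_sum_sq:
  assumes "norm (a::'a) = 1" "norm c = 1" "cmod t = 1"
  shows "complex_of_real ((norm (a + scaleC t c))^2) = 2 + t * cinner a c + cnj t * cinner c a"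
proof -
  have "complex_of_real ((norm (a + scaleC t c))^2) = cinner (a + scaleC t c) (a + scaleC t c)"
    by (simp only: cinner_self_norm)
  also have "\<dots> = cinner a a + t * cinner a c + cnj t * cinner c a + cnj t * t * cinner c c"
    by (simp add: cinner_add_left cinner_add_right cinner_scaleC_left cinner_scaleC_right algebra_simps)
  finally show ?thesis using assms cnj_t[OF assms(3)] by (simp add: cinner_self_norm)
qed

lemma doubling:
  assumes w: "\<forall>i<k. norm (w i) = 1" and att: "cmod (T w) = form_norm k T"
    and ij: "i < k" "j < k" "i \<noteq> j" and t: "cmod t = 1"
  shows "T (w(i := w i + scaleC t (w j), j := w i + scaleC t (w j)))
     = t * complex_of_real ((norm (w i + scaleC t (w j)))^2) * T w"
proof -
  have e1: "T (w(i := w i, j := w i)) = T w * cinner (w j) (w i)"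
    using FO[OF w att ij(2)] by simp
  have e2: "T (w(i := w i, j := w j)) = T w" by simp
  have e3: "T (w(i := w j, j := w i)) = T w" using swap[OF ij, of w "w j" "w i"] by simp
  have e4: "T (w(i := w j, j := w j)) = T w * cinner (w i) (w j)"
  proof -
    have "w(i := w j, j := w j) = w(i := w j)" using ij(3) by (auto simp: fun_eq_iff)
    thus ?thesis using FO[OF w att ij(1)] by simp
  qed
  have n: "complex_of_real ((norm (w i + scaleC t (w j)))^2) = 2 + t * cinner (w i) (w j) + cnj t * cinner (w j) (w i)"
    using w ij t by (intro norm_sum_sq) auto
  have tc: "cnj t * t = 1" using cnj_t[OF t] .
  show ?thesis
    unfolding expand2[OF ij] e1 e2 e3 e4 n
  proof -
    have "t * (2 + t * cinner (w i) (w j) + cnj t * cinner (w j) (w i)) * T w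
      = 2 * t * T w + t^2 * cinner (w i) (w j) * T w + (cnj t * t) * cinner (w j) (w i) * T w"
      by (simp add: algebra_simps power2_eq_square)
    thus "T w * cinner (w j) (w i) + t * T w + t * T w + t\<^sup>2 * (T w * cinner (w i) (w j)) =
      t * (2 + t * cinner (w i) (w j) + cnj t * cinner (w j) (w i)) * T w"
      unfolding tc by (simp add: algebra_simps)
  qed
qed

lemma doubling_att:
  assumes w: "\<forall>i<k. norm (w i) = 1" and att: "cmod (T w) = form_norm k T"
    and ij: "i < k" "j < k" "i \<noteq> j" and t: "cmod t = 1"
    and v0: "w i + scaleC t (w j) \<noteq> 0"
  defines "z \<equiv> scaleR (1 / norm (w i + scaleC t (w j))) (w i + scaleC t (w j))"
  shows "\<forall>m<k. norm ((w(i := z, j := z)) m) = 1" and "T (w(i := z, j := z)) = t * T w"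
proof -
  show "\<forall>m<k. norm ((w(i := z, j := z)) m) = 1" using w v0 by (simp add: z_def)
  have "T (w(i := z, j := z)) = complex_of_real ((1 / norm (w i + scaleC t (w j)))^2) * 
     (t * complex_of_real ((norm (w i + scaleC t (w j)))^2) * T w)"
    unfolding z_def hom2[OF ij] doubling[OF w att ij t] ..
  also have "\<dots> = t * T w" using v0 by (simp add: power_one_over field_simps)
  finally show "T (w(i := z, j := z)) = t * T w" .
qed


lemma equal_pair_identity:
  assumes w: "\<forall>i<k. norm (w i) = 1" and att: "cmod (T w) = form_norm k T"
    and idx: "i < k" "j < k" "l < k" "i \<noteq> j" "i \<noteq> l" "j \<noteq> l"
    and eq: "w j = w i" and t: "cmod t = 1"
    and v0: "w i + scaleC t (w l) \<noteq> 0"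
  shows "T w * cinner (w l) u + t^2 * T (w(j := u, i := w l)) =
    t * (t * cinner (w i) (w l) + cnj t * cinner (w l) (w i)) * T w * cinner (w i) u"
proof -
  define a where "a = w i"
  define c where "c = w l"
  define v where "v = a + scaleC t c"
  define nv where "nv = norm v"
  define z where "z = scaleR (1 / nv) v"
  define W where "W = w(j := u)"
  have v0': "v \<noteq> 0" using v0 by (simp add: v_def a_def c_def)
  have nvpos: "nv > 0" using v0' by (simp add: nv_def)
  have il: "i < k" "l < k" "i \<noteq> l" using idx by auto
  note D = doubling_att[OF w att il t v0]
  have w'unit: "\<forall>m<k. norm ((w(i := z, l := z)) m) = 1"
    using D(1) by (simp add: z_def v_def nv_def a_def c_def)
  have Tw': "T (w(i := z, l := z)) = t * T w"
    using D(2) by (simp add: z_def v_def nv_def a_def c_def)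
  have att': "cmod (T (w(i := z, l := z))) = form_norm k T"
    using Tw' att t by (simp add: norm_mult)
  have "T ((w(i := z, l := z))(j := u)) = T (w(i := z, l := z)) * cinner ((w(i := z, l := z)) j) u"
    by (rule FO[OF w'unit att' idx(2)])
  also have "\<dots> = t * T w * cinner a u" using idx Tw' by (simp add: a_def eq)
  finally have f1: "T (W(i := z, l := z)) = t * T w * cinner a u"
    using idx by (simp add: W_def fun_upd_twist)
  have "T (W(i := z, l := z)) = complex_of_real ((1 / nv)^2) * T (W(i := v, l := v))"
    unfolding z_def by (rule hom2[OF il])
  with f1 have f2: "T (W(i := v, l := v)) = complex_of_real (nv^2) * (t * T w * cinner a u)"
    using nvpos by (simp add: power_one_over field_simps)
  have ex: "T (W(i := v, l := v)) = T (W(i := a, l := a)) + t * T (W(i := a, l := c)) + t * T (W(i := c, l := a)) + t^2 * T (W(i := c, l := c))"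
    unfolding v_def by (rule expand2[OF il])
  have WA: "T W = T w * cinner a u" using FO[OF w att idx(2)] by (simp add: W_def eq a_def)
  have x1: "T (W(i := a, l := a)) = T w * cinner c u"
  proof -
    have "W(i := a, l := a) = w(j := u, l := w j)" using idx by (auto simp: W_def a_def eq fun_eq_iff)
    hence "T (W(i := a, l := a)) = T (w(j := w j, l := u))" using swap[of j l w u "w j"] idx by simp
    thus ?thesis using FO[OF w att idx(3)] by (simp add: c_def)
  qed
  have x2: "T (W(i := a, l := c)) = T w * cinner a u"
  proof -
    have "W(i := a, l := c) = W" using idx by (auto simp: W_def a_def c_def eq fun_eq_iff)
    thus ?thesis using WA by simp
  qed
  have x3: "T (W(i := c, l := a)) = T w * cinner a u"
    using swap[OF il, of W c a] x2 by simp
  have x4: "T (W(i := c, l := c)) = T (w(j := u, i := w l))"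
  proof -
    have "W(i := c, l := c) = w(j := u, i := w l)" using idx by (auto simp: W_def c_def fun_eq_iff)
    thus ?thesis by simp
  qed
  have n: "complex_of_real (nv^2) = 2 + t * cinner a c + cnj t * cinner c a"
    unfolding nv_def v_def using w idx t by (intro norm_sum_sq) (auto simp: a_def c_def)
  from f2 ex x1 x2 x3 x4 n have
    "T w * cinner c u + t * (T w * cinner a u) + t * (T w * cinner a u) + t^2 * T (w(j := u, i := w l))
      = (2 + t * cinner a c + cnj t * cinner c a) * (t * T w * cinner a u)" by simp
  thus ?thesis by (simp add: a_def c_def algebra_simps)
qed


lemma equal_pair_parallel:
  assumes w: "\<forall>i<k. norm (w i) = 1" and att: "cmod (T w) = form_norm k T"
    and idx: "i < k" "j < k" "l < k" "i \<noteq> j" "i \<noteq> l" "j \<noteq> l"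
    and eq: "w j = w i"
  shows "\<exists>c. w l = scaleC c (w i)"
proof -
  consider (h1) "w i + scaleC 1 (w l) = 0" | (h2) "w i + scaleC \<i> (w l) = 0"
    | (h3) "w i + scaleC 1 (w l) \<noteq> 0" "w i + scaleC \<i> (w l) \<noteq> 0" by blast
  then show ?thesis
  proof cases
    case h1
    hence "w l = - w i" by (simp add: scaleC_one add_eq_0_iff)
    hence "w l = scaleC (-1) (w i)" by (simp add: scaleC_minus_left scaleC_one)
    thus ?thesis by blast
  next
    case h2
    hence e: "scaleC \<i> (w l) = - w i" by (simp add: add_eq_0_iff)
    have "w l = scaleC (-\<i>) (scaleC \<i> (w l))" by (simp add: scaleC_scaleC scaleC_one)
    also have "\<dots> = scaleC \<i> (w i)" unfolding e
      by (metis minus_minus scaleC_minus_left scaleC_one scaleC_scaleC mult_minus_right mult_1_right)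
    finally show ?thesis by blast
  next
    case h3
    define a where "a = w i"
    define c where "c = w l"
    have Tw0: "T w \<noteq> 0" using att M_pos by auto
    have key: "cinner c u = cinner c a * cinner a u" for u
    proof -
      have E1: "T w * cinner (w l) u + 1^2 * T (w(j := u, i := w l)) =
        1 * (1 * cinner (w i) (w l) + cnj 1 * cinner (w l) (w i)) * T w * cinner (w i) u"
        by (rule equal_pair_identity[OF w att idx eq]) (use h3 in auto)
      have E2: "T w * cinner (w l) u + \<i>^2 * T (w(j := u, i := w l)) =
        \<i> * (\<i> * cinner (w i) (w l) + cnj \<i> * cinner (w l) (w i)) * T w * cinner (w i) u"
        by (rule equal_pair_identity[OF w att idx eq]) (use h3 in auto)
      define X where "X = T (w(j := u, i := w l))"
      define C where "C = T w * cinner (w l) u"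
      define P where "P = T w * cinner (w i) u"
      have E1': "C + X = (cinner (w i) (w l) + cinner (w l) (w i)) * P"
        using E1 by (simp add: X_def C_def P_def algebra_simps)
      have E2': "C - X = (cinner (w l) (w i) - cinner (w i) (w l)) * P"
        using E2 by (simp add: X_def C_def P_def algebra_simps power2_eq_square)
      have "(C + X) + (C - X) = (cinner (w i) (w l) + cinner (w l) (w i)) * P + (cinner (w l) (w i) - cinner (w i) (w l)) * P"
        using E1' E2' by simp
      hence "2 * C = 2 * (cinner (w l) (w i) * P)" by (simp add: algebra_simps)
      hence "C = cinner (w l) (w i) * P" by simp
      hence "T w * cinner (w l) u = T w * (cinner (w l) (w i) * cinner (w i) u)" by (simp add: C_def P_def mult_ac)
      thus ?thesis using Tw0 by (simp add: a_def c_def)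
    qed
    define d where "d = c - scaleC (cinner a c) a"
    have aa: "cinner a a = 1" using w idx by (simp add: a_def cinner_self_norm)
    have ad: "cinner a d = 0" by (simp add: d_def cinner_diff_right cinner_scaleC_right aa)
    have cd: "cinner c d = 0" using key[of d] ad by simp
    have "cinner d d = cinner c d - cnj (cinner a c) * cinner a d"
      by (simp add: d_def cinner_diff_left cinner_scaleC_left)
    hence "cinner d d = 0" using ad cd by simp
    hence "d = 0" by (simp add: cinner_self_eq_0)
    hence "c = scaleC (cinner a c) a" by (simp add: d_def)
    thus ?thesis by (auto simp: a_def c_def)
  qed
qed



lemma pair_parallel:
  assumes w: "\<forall>i<k. norm (w i) = 1" and att: "cmod (T w) = form_norm k T"
    and idx: "i < k" "j < k" "i \<noteq> j"
  shows "\<exists>c. w j = scaleC c (w i)"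
proof -
  define l :: nat where "l = (if 0 \<notin> {i, j} then 0 else if 1 \<notin> {i, j} then 1 else 2)"
  have l: "l < k" "l \<noteq> i" "l \<noteq> j" using k3 idx by (auto simp: l_def)
  define a where "a = w i"
  define b where "b = w j"
  have a0: "a \<noteq> 0" using w idx by (auto simp: a_def)
  have wl0: "w l \<noteq> 0" using w l by auto
  consider (h1) "w i + scaleC 1 (w j) = 0" | (h2) "w i + scaleC (-1) (w j) = 0"
    | (h3) "w i + scaleC 1 (w j) \<noteq> 0" "w i + scaleC (-1) (w j) \<noteq> 0" by blast
  then show ?thesis
  proof cases
    case h1
    hence "w i + w j = 0" by (simp add: scaleC_one)
    hence "w j = - w i" by (metis add.commute add_eq_0_iff)
    hence "w j = scaleC (-1) (w i)" by (simp add: scaleC_minus_left scaleC_one)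
    thus ?thesis by blast
  next
    case h2
    hence "w j = w i" by (simp add: scaleC_minus_left scaleC_one)
    hence "w j = scaleC 1 (w i)" by (simp add: scaleC_one)
    thus ?thesis by blast
  next
    case h3
    have par: "\<exists>\<alpha>. w l = scaleC \<alpha> (w i + scaleC t (w j))"
      if t: "cmod t = 1" and v0: "w i + scaleC t (w j) \<noteq> 0" for t
    proof -
      define z where "z = scaleR (1 / norm (w i + scaleC t (w j))) (w i + scaleC t (w j))"
      note D = doubling_att[OF w att idx t v0]
      have u1: "\<forall>m<k. norm ((w(i := z, j := z)) m) = 1" using D(1) by (simp add: z_def)
      have a1: "cmod (T (w(i := z, j := z))) = form_norm k T"
        using D(2) att t by (simp add: z_def norm_mult)
      have "\<exists>c. (w(i := z, j := z)) l = scaleC c ((w(i := z, j := z)) i)"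
        by (rule equal_pair_parallel[OF u1 a1 idx(1) idx(2) l(1) idx(3) l(2)[symmetric] l(3)[symmetric]])
          (use idx in simp)
      then obtain c where "(w(i := z, j := z)) l = scaleC c ((w(i := z, j := z)) i)" by blast
      hence "w l = scaleC c z" using l idx by simp
      also have "\<dots> = scaleC (c * complex_of_real (1 / norm (w i + scaleC t (w j)))) (w i + scaleC t (w j))"
        by (simp add: z_def scaleR_scaleC scaleC_scaleC)
      finally show ?thesis by blast
    qed
    obtain \<alpha> where al: "w l = scaleC \<alpha> (a + scaleC 1 b)" using par[of 1] h3 by (auto simp: a_def b_def)
    obtain \<beta> where be: "w l = scaleC \<beta> (a + scaleC (-1) b)" using par[of "-1"] h3 by (auto simp: a_def b_def)
    have "scaleC (\<alpha> - \<beta>) a + scaleC (\<alpha> + \<beta>) b = scaleC \<alpha> (a + scaleC 1 b) - scaleC \<beta> (a + scaleC (-1) b)"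
      by (simp add: scaleC_add_right scaleC_add_left scaleC_diff_left scaleC_one scaleC_minus_left scaleC_diff_right algebra_simps)
    hence lin: "scaleC (\<alpha> - \<beta>) a + scaleC (\<alpha> + \<beta>) b = 0" using al be by simp
    show ?thesis
    proof (cases "\<alpha> + \<beta> = 0")
      case False
      have "scaleC (\<alpha> + \<beta>) b = - scaleC (\<alpha> - \<beta>) a"
        using lin by (metis add.commute add_eq_0_iff)
      hence "scaleC (\<alpha> + \<beta>) b = scaleC (-(\<alpha> - \<beta>)) a"
        by (simp only: scaleC_minus_left)
      hence "scaleC (1 / (\<alpha> + \<beta>)) (scaleC (\<alpha> + \<beta>) b) = scaleC (1 / (\<alpha> + \<beta>)) (scaleC (-(\<alpha> - \<beta>)) a)"
        by simp
      hence "b = scaleC (-(\<alpha> - \<beta>) / (\<alpha> + \<beta>)) a" using False by (simp add: scaleC_scaleC scaleC_one)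
      thus ?thesis by (auto simp: a_def b_def)
    next
      case True
      hence "\<beta> = - \<alpha>" by (metis add.commute add_eq_0_iff)
      hence "scaleC (2 * \<alpha>) a = 0" using lin by (simp add: scaleC_add_left[symmetric])
      hence "cmod (2 * \<alpha>) * norm a = 0" by (metis norm_scaleC norm_zero)
      hence "\<alpha> = 0" using a0 by simp
      hence "w l = 0" using al by simp
      thus ?thesis using wl0 by simp
    qed
  qed
qed

end


theorem proposition3p1:
  fixes T :: "(nat \<Rightarrow> 'a::complex_hilbert) \<Rightarrow> complex"
    and x :: "nat \<Rightarrow> 'a"
    and k :: nat
  assumes "k \<ge> 3"
    and "multilinear_form k T"
    and "symmetric_form k T"
    and "continuous_on UNIV T"
    and "T \<noteq> (\<lambda>_. 0)"
    and "\<forall>i<k. norm (x i) = 1"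
    and "attains_norm_at k T x"
  shows "cdim (x ` {..<k}) = 1"
proof -
  have att: "cmod (T x) = form_norm k T" using assms(7) by (simp add: attains_norm_at_def)
  have k0: "0 < k" using assms(1) by simp
  have par: "\<exists>c. x i = scaleC c (x 0)" if "i < k" for i
  proof (cases "i = 0")
    case True
    then show ?thesis by (metis scaleC_one)
  next
    case False
    show ?thesis
      by (rule pair_parallel[OF assms(2) assms(3) assms(4) assms(5) assms(1) assms(6) att k0 that])
        (use False in simp)
  qed
  have x0: "x 0 \<noteq> 0" using assms(6) k0 by auto
  interpret vs: vector_space "scaleC :: complex \<Rightarrow> 'a \<Rightarrow> 'a"
    by (rule complex_hilbert_vector_space)
  show ?thesis
  proof (rule vs.dim_unique[where B = "{x 0}"])
    show "{x 0} \<subseteq> x ` {..<k}" using k0 by auto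
    show "x ` {..<k} \<subseteq> vs.span {x 0}"
    proof
      fix y assume "y \<in> x ` {..<k}"
      then obtain i where i: "i < k" "y = x i" by auto
      then obtain c where "x i = scaleC c (x 0)" using par by blast
      thus "y \<in> vs.span {x 0}" using i by (simp add: vs.span_scale vs.span_base)
    qed
    show "vs.independent {x 0}" using x0 by (simp add: vs.independent_insert)
    show "card {x 0} = 1" by simp
  qed
qed

end
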